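(* Let $f:\mathbb{R}^m\times\mathbb{R}\to\mathbb{R}^m$ be Lipschitz continuous and let $y$ solve the initial value problem $\dot y = f(y,t)$, $t\in(0,T]$, $y(0)=y_0$. Let $S$ be a linear functional on $\mathbb{R}^m$ satisfying the Lipschitz condition $|S(y_1(t))-S(y_2(t))|\le K\|y_1(t)-y_2(t)\|_{\mathbb{R}^m}$ for some constant $K>0$. Let $Y(t)$ be a continuous numerical approximation of $y$ computed with step-size $h$ such that $$\|y(t)-Y(t)\|_{\mathbb{R}^m}\le C h^p\quad\text{for all } t\in[0,T],$$ for some constant $C>0$. For a threshold value $R$, let $t_t=\min_{t\in(0,T]}\arg(S(y(t))=R)$ and $t_c=\min_{t\in(0,T]}\arg(S(Y(t))=R)$ (so that $S(y(t_t))=R=S(Y(t_c))$), and let $e_Q=t_t-t_c$. Assume that $t\mapsto S(y(t))$ is continuously differentiable in a neighborhood $B$ which contains both $t_t$ and $t_c$, and that there exists $M>0$ such that $\left|\frac{dS}{dt}(y(t))\right|>M$ for all $t\in B$. Then $$e_Q\le \widehat{C}h^p$$ for some constant $\widehat{C}$ which depends on $M$, $C$ and $K$.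
   Context: $\|\cdot\|_{\mathbb{R}^m}$ is the Euclidean norm. It is assumed that the threshold $S(y(t))=R$ is crossed at some time in $(0,T)$, so $t_t$ exists; likewise $t_c$ is the first time the computed functional reaches $R$. *)

theory Defs
  imports "HOL-Analysis.Analysis"
begin

definition first_hit :: "(real \<Rightarrow> real) \<Rightarrow> real \<Rightarrow> real \<Rightarrow> real \<Rightarrow> bool" where
  "first_hit g R T tt \<longleftrightarrow>
     tt \<in> {0<..T} \<and> g tt = R \<and> (\<forall>t\<in>{0<..T}. g t = R \<longrightarrow> tt \<le> t)"

end

theory Submission
  imports Defs
begin

lemma key:
  fixes y Y :: "real \<Rightarrow> 'a::euclidean_space" and S :: "'a \<Rightarrow> real"
  assumes T: "T > 0" and K: "K > 0" and SL: "\<forall>a b. \<bar>S a - S b\<bar> \<le> K * norm (a - b)"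
    and C: "C > 0" and h: "h > 0"
    and err: "\<forall>t\<in>{0..T}. norm (y t - Y t) \<le> C * h ^ p"
    and ft: "first_hit (\<lambda>t. S (y t)) R T tt"
    and fc: "first_hit (\<lambda>t. S (Y t)) R T tc"
    and B: "connected B" "tt \<in> B" "tc \<in> B"
    and D: "\<forall>t\<in>B. ((\<lambda>s. S (y s)) has_real_derivative dS t) (at t)"
    and M: "M > 0" "\<forall>t\<in>B. \<bar>dS t\<bar> > M"
  shows "tt - tc \<le> K * C / M * h ^ p"
proof (cases "tt \<le> tc")
  case True
  have "0 \<le> K * C / M * h ^ p" using K C M h by simp
  then show ?thesis using True by linarith
next
  case False
  hence lt: "tc < tt" by simp
  have St: "S (y tt) = R" using ft unfolding first_hit_def by simp
  have Sc: "S (Y tc) = R" and tcT: "tc \<in> {0..T}" using fc unfolding first_hit_def by auto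
  have "\<forall>x. tc \<le> x \<and> x \<le> tt \<longrightarrow> DERIV (\<lambda>s. S (y s)) x :> dS x"
  proof (intro allI impI)
    fix x assume "tc \<le> x \<and> x \<le> tt"
    hence "x \<in> B" using B connected_iff_interval[of B] by (metis linorder_linear order_trans)
    thus "DERIV (\<lambda>s. S (y s)) x :> dS x" using D by blast
  qed
  then obtain z where z: "tc < z" "z < tt" "S (y tt) - S (y tc) = (tt - tc) * dS z"
    using MVT2[OF lt] by blast
  have zB: "z \<in> B" using B z connected_iff_interval[of B] by (metis less_imp_le linorder_linear order_trans)
  have dz: "\<bar>dS z\<bar> > M" using M zB by blast
  have "\<bar>S (Y tc) - S (y tc)\<bar> \<le> K * norm (Y tc - y tc)" using SL by blast
  also have "norm (Y tc - y tc) \<le> C * h ^ p" using err tcT by (metis norm_minus_commute)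
  hence "K * norm (Y tc - y tc) \<le> K * (C * h ^ p)" using K by simp
  finally have e: "(tt - tc) * \<bar>dS z\<bar> \<le> K * (C * h ^ p)"
    using z St Sc lt by (simp add: abs_mult)
  have "(tt - tc) * M \<le> (tt - tc) * \<bar>dS z\<bar>" using dz lt by simp
  with e have "(tt - tc) * M \<le> K * C * h ^ p" by simp
  thus ?thesis using M by (simp add: field_simps)
qed

theorem theorem1:
  shows "\<exists>Chat :: real \<Rightarrow> real \<Rightarrow> real \<Rightarrow> real.
    \<forall>(f :: 'a::euclidean_space \<Rightarrow> real \<Rightarrow> 'a) (y :: real \<Rightarrow> 'a) (y0 :: 'a) (T :: real)
      (S :: 'a \<Rightarrow> real) (K :: real) (Y :: real \<Rightarrow> 'a) (h :: real) (p :: nat) (C :: real)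
      (R :: real) (tt :: real) (tc :: real) (B :: real set) (dS :: real \<Rightarrow> real) (M :: real).
      (\<exists>L. L-lipschitz_on UNIV (\<lambda>(x, t). f x t)) \<and>
      T > 0 \<and> y 0 = y0 \<and>
      (\<forall>t\<in>{0<..T}. (y has_vector_derivative f (y t) t) (at t within {0..T})) \<and>
      linear S \<and> K > 0 \<and> (\<forall>a b. \<bar>S a - S b\<bar> \<le> K * norm (a - b)) \<and>
      continuous_on {0..T} Y \<and> h > 0 \<and> C > 0 \<and>
      (\<forall>t\<in>{0..T}. norm (y t - Y t) \<le> C * h ^ p) \<and>
      first_hit (\<lambda>t. S (y t)) R T tt \<and>
      first_hit (\<lambda>t. S (Y t)) R T tc \<and>
      open B \<and> connected B \<and> tt \<in> B \<and> tc \<in> B \<and>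
      (\<forall>t\<in>B. ((\<lambda>s. S (y s)) has_real_derivative dS t) (at t)) \<and>
      continuous_on B dS \<and>
      M > 0 \<and> (\<forall>t\<in>B. \<bar>dS t\<bar> > M)
      \<longrightarrow> tt - tc \<le> Chat M C K * h ^ p"
  apply (rule exI[of _ "\<lambda>M C K. K * C / M"])
  apply (intro allI impI)
  apply (elim conjE)
  apply (rule key; assumption)
  done

end
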